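(* Let $(\mathbb{X},\oplus,\otimes,\mathbb{0},\mathbb{1})$ be a linearly ordered, algebraically complete idempotent semifield, and let $\bm{A}\in\mathbb{X}^{n\times n}$ be a matrix such that the matrix $\bm{B}=\bm{A}\oplus\bm{A}^{-}$ has no zero entries. Let $\mu$ be the spectral radius of $\bm{B}$ and $\bm{B}_{\mu}=\mu^{-1}\bm{B}$. Consider the problem of minimizing $d(\bm{A},\bm{x}\bm{x}^{-})$ over all regular vectors $\bm{x}=(x_j)\in\mathbb{X}^{n}$ (i.e. $x_j>\mathbb{0}$ for $j=1,\ldots,n$). Then the minimum value of this problem equals $\mu$, and the set of all solutions is $\{\bm{x}=\bm{B}_{\mu}^{\ast}\bm{u} : \bm{u}\in\mathbb{X}^n,\ \bm{u}\neq\bm{0}\}$.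
   Context: An idempotent semifield is a set $\mathbb{X}$ with associative, commutative operations $\oplus$ (addition) and $\otimes$ (multiplication, usually omitted in writing) with neutral elements $\mathbb{0}$ and $\mathbb{1}$, multiplication distributing over addition, idempotent addition ($x\oplus x=x$), and every nonzero $x$ having an inverse $x^{-1}$ with $xx^{-1}=\mathbb{1}$. It is assumed linearly ordered by the order $x\le y \iff x\oplus y=y$, and algebraically complete: $x^p=a$ is solvable for every $a$ and integer $p>0$, so rational powers are defined. (Examples: $(\mathbb{R}_{>0}\cup\{0\},\max,\times,0,1)$ and $(\mathbb{R}\cup\{-\infty\},\max,+,-\infty,0)$.) Matrix and vector addition and multiplication are defined by the usual formulas with $\oplus,\otimes$ in place of $+,\times$; $\bm{0}$ is the zero vector; a vector is regular if it has no zero entries. For a nonzero column vector $\bm{x}=(x_i)$, $\bm{x}^{-}$ is the row vector with entries $x_i^{-1}$ if $x_i\ne\mathbb{0}$ and $\mathbb{0}$ otherwise. For a nonzero matrix $\bm{A}=(a_{ij})$, $\bm{A}^{-}=(a^{-}_{ij})$ with $a^{-}_{ij}=a_{ji}^{-1}$ if $a_{ji}\neq\mathbb{0}$ and $\mathbb{0}$ otherwise. The trace is $\mathrm{tr}\,\bm{A}=a_{11}\oplus\cdots\oplus a_{nn}$. The distance between square matrices is $d(\bm{A},\bm{B})=\mathrm{tr}(\bm{B}^{-}\bm{A})\oplus\mathrm{tr}(\bm{A}^{-}\bm{B})$. $\bm{I}$ is the identity matrix ($\mathbb{1}$ on the diagonal, $\mathbb{0}$ elsewhere), $\bm{A}^0=\bm{I}$,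 $\bm{A}^p=\bm{A}^{p-1}\bm{A}$. The spectral radius of $\bm{A}\in\mathbb{X}^{n\times n}$ is $\lambda=\bigoplus_{k=1}^{n}\mathrm{tr}^{1/k}(\bm{A}^k)=\bigoplus_{k=1}^{n}\bigoplus_{1\le i_1,\ldots,i_k\le n}(a_{i_1i_2}a_{i_2i_3}\cdots a_{i_ki_1})^{1/k}$. For a square matrix $\bm{M}$ of order $n$, $\bm{M}^{\ast}=\bm{I}\oplus\bm{M}\oplus\cdots\oplus\bm{M}^{n-1}$. *)

theory Defs
  imports Main
begin

text \<open>Linearly ordered, algebraically complete idempotent semifield.
  Addition is the idempotent semiring addition (written +), multiplication is *,
  the order is the linear order induced by addition.\<close>

class idem_semifield = comm_semiring_1 + inverse + linorder +
  assumes add_idem: "x + x = x"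
  and le_iff_add: "x \<le> y \<longleftrightarrow> x + y = y"
  and zero_neq_one_sf: "(0::'a) \<noteq> 1"
  and right_inverse_sf: "x \<noteq> 0 \<Longrightarrow> x * inverse x = 1"
  and alg_complete: "0 < p \<Longrightarrow> \<exists>y. y ^ p = a"

type_synonym ('a, 'n) sqmat = "'n \<Rightarrow> 'n \<Rightarrow> 'a"
type_synonym ('a, 'n) vect = "'n \<Rightarrow> 'a"

definition mroot :: "nat \<Rightarrow> 'a::idem_semifield \<Rightarrow> 'a" where
  "mroot k a = (THE y. y ^ k = a)"

definition mmul :: "('a::idem_semifield, 'n::finite) sqmat \<Rightarrow> ('a, 'n) sqmat \<Rightarrow> ('a, 'n) sqmat" where
  "mmul A B = (\<lambda>i j. \<Sum>k\<in>UNIV. A i k * B k j)"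

definition mvmul :: "('a::idem_semifield, 'n::finite) sqmat \<Rightarrow> ('a, 'n) vect \<Rightarrow> ('a, 'n) vect" where
  "mvmul A x = (\<lambda>i. \<Sum>k\<in>UNIV. A i k * x k)"

definition madd :: "('a::idem_semifield, 'n) sqmat \<Rightarrow> ('a, 'n) sqmat \<Rightarrow> ('a, 'n) sqmat" where
  "madd A B = (\<lambda>i j. A i j + B i j)"

definition msmul :: "'a::idem_semifield \<Rightarrow> ('a, 'n) sqmat \<Rightarrow> ('a, 'n) sqmat" where
  "msmul c A = (\<lambda>i j. c * A i j)"

definition mid :: "('a::idem_semifield, 'n) sqmat" where
  "mid = (\<lambda>i j. if i = j then 1 else 0)"

primrec mpow :: "('a::idem_semifield, 'n::finite) sqmat \<Rightarrow> nat \<Rightarrow> ('a, 'n) sqmat" where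
  "mpow A 0 = mid"
| "mpow A (Suc p) = mmul (mpow A p) A"

definition mtr :: "('a::idem_semifield, 'n::finite) sqmat \<Rightarrow> 'a" where
  "mtr A = (\<Sum>i\<in>UNIV. A i i)"

definition mconj :: "('a::idem_semifield, 'n) sqmat \<Rightarrow> ('a, 'n) sqmat" where
  "mconj A = (\<lambda>i j. if A j i \<noteq> 0 then inverse (A j i) else 0)"

definition vconj :: "('a::idem_semifield, 'n) vect \<Rightarrow> ('a, 'n) vect" where
  "vconj x = (\<lambda>j. if x j \<noteq> 0 then inverse (x j) else 0)"

definition vouter :: "('a::idem_semifield, 'n) vect \<Rightarrow> ('a, 'n) vect \<Rightarrow> ('a, 'n) sqmat" where
  "vouter x y = (\<lambda>i j. x i * y j)"

definition mdist :: "('a::idem_semifield, 'n::finite) sqmat \<Rightarrow> ('a, 'n) sqmat \<Rightarrow> 'a" where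
  "mdist A B = mtr (mmul (mconj B) A) + mtr (mmul (mconj A) B)"

definition spec_rad :: "('a::idem_semifield, 'n::finite) sqmat \<Rightarrow> 'a" where
  "spec_rad A = (\<Sum>k\<in>{1..card (UNIV::'n set)}. mroot k (mtr (mpow A k)))"

definition mstar :: "('a::idem_semifield, 'n::finite) sqmat \<Rightarrow> ('a, 'n) sqmat" where
  "mstar M = (\<lambda>i j. \<Sum>p\<in>{..<card (UNIV::'n set)}. mpow M p i j)"

definition regular :: "('a::idem_semifield, 'n) vect \<Rightarrow> bool" where
  "regular x \<longleftrightarrow> (\<forall>j. x j \<noteq> 0)"

end

theory Submission
  imports Defs
begin


context idem_semifield begin

lemma add_is_max: "x + y = max x y"
proof (cases "x \<le> y")
  case True thus ?thesis using le_iff_add by (simp add: max_def)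
next
  case False hence "y \<le> x" by simp
  thus ?thesis using le_iff_add[of y x] False by (simp add: max_def add.commute)
qed

lemma zero_le_sf: "0 \<le> x" using le_iff_add by simp

lemma add_le_iff_sf: "x + y \<le> z \<longleftrightarrow> x \<le> z \<and> y \<le> z"
  by (simp add: add_is_max)

lemma le_add1_sf: "x \<le> x + y" by (simp add: add_is_max)
lemma le_add2_sf: "y \<le> x + y" by (simp add: add_is_max)

lemma mult_left_mono_sf: "a \<le> b \<Longrightarrow> c * a \<le> c * b"
  using le_iff_add by (metis distrib_left)

lemma mult_right_mono_sf: "a \<le> b \<Longrightarrow> a * c \<le> b * c"
  using mult_left_mono_sf by (simp add: mult.commute)

lemma mult_mono_sf: "a \<le> b \<Longrightarrow> c \<le> d \<Longrightarrow> a * c \<le> b * d"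
  by (meson mult_left_mono_sf mult_right_mono_sf order_trans)

lemma left_inverse_sf: "x \<noteq> 0 \<Longrightarrow> inverse x * x = 1"
  using right_inverse_sf by (simp add: mult.commute)

lemma inverse_nz_sf: "x \<noteq> 0 \<Longrightarrow> inverse x \<noteq> 0"
proof
  assume "x \<noteq> 0" "inverse x = 0"
  have "x * inverse x = 1" using right_inverse_sf \<open>x \<noteq> 0\<close> by blast
  hence "(0::'a) = 1" using \<open>inverse x = 0\<close> by simp
  thus False using zero_neq_one_sf by simp
qed

lemma mult_nz_sf: "a \<noteq> 0 \<Longrightarrow> b \<noteq> 0 \<Longrightarrow> a * b \<noteq> 0"
proof
  assume a: "a \<noteq> 0" "b \<noteq> 0" "a * b = 0"
  have "b = inverse a * a * b" using left_inverse_sf[OF a(1)] by simp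
  also have "\<dots> = 0" using a(3) by (simp add: mult.assoc)
  finally show False using a(2) by simp
qed

lemma inverse_unique_sf: "x * y = 1 \<Longrightarrow> inverse x = y"
proof -
  assume h: "x * y = 1"
  have "x \<noteq> 0" using h zero_neq_one_sf by force
  hence "inverse x = inverse x * (x * y)" using h by simp
  also have "\<dots> = y" using left_inverse_sf[OF \<open>x\<noteq>0\<close>] by (simp add: mult.assoc[symmetric])
  finally show ?thesis .
qed

lemma inverse_mult_sf: "a \<noteq> 0 \<Longrightarrow> b \<noteq> 0 \<Longrightarrow> inverse (a * b) = inverse a * inverse b"
  apply (rule inverse_unique_sf)
  using right_inverse_sf by (metis mult.assoc mult.left_commute mult_1_right)

lemma inverse_inverse_sf: "a \<noteq> 0 \<Longrightarrow> inverse (inverse a) = a"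
  by (rule inverse_unique_sf) (rule left_inverse_sf)

lemma mult_cancel_le_sf: "z \<noteq> 0 \<Longrightarrow> z * a \<le> z * b \<longleftrightarrow> a \<le> b"
proof
  assume z: "z \<noteq> 0" and h: "z * a \<le> z * b"
  have "inverse z * (z * a) \<le> inverse z * (z * b)" by (rule mult_left_mono_sf[OF h])
  thus "a \<le> b" using left_inverse_sf[OF z] by (simp add: mult.assoc[symmetric])
qed (rule mult_left_mono_sf)

lemma le_mult_iff_sf: "z \<noteq> 0 \<Longrightarrow> a \<le> z * b \<longleftrightarrow> inverse z * a \<le> b"
proof -
  assume z: "z \<noteq> 0"
  have "a \<le> z * b \<longleftrightarrow> inverse z * a \<le> inverse z * (z * b)"
    using mult_cancel_le_sf[OF inverse_nz_sf[OF z]] by simp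
  also have "inverse z * (z * b) = b" using left_inverse_sf[OF z] by (simp add: mult.assoc[symmetric])
  finally show ?thesis .
qed

lemma power_mono_sf: "a \<le> b \<Longrightarrow> a ^ k \<le> b ^ k"
  by (induction k) (auto intro: mult_mono_sf)

lemma power_nz_sf: "a \<noteq> 0 \<Longrightarrow> a ^ k \<noteq> 0"
  by (induction k) (auto simp: mult_nz_sf zero_neq_one_sf[symmetric])

lemma power_strict_sf: "a < b \<Longrightarrow> 0 < k \<Longrightarrow> a ^ k < b ^ k"
proof -
  assume ab: "a < b" and k: "0 < k"
  then obtain m where m: "k = Suc m" by (cases k) auto
  have bnz: "b \<noteq> 0" using ab zero_le_sf[of a] by auto
  have "a ^ k = a * a ^ m" using m by simp
  also have "\<dots> \<le> a * b ^ m" by (rule mult_left_mono_sf[OF power_mono_sf]) (use ab in simp)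
  also have "\<dots> < b * b ^ m"
  proof -
    have nz: "b ^ m \<noteq> 0" by (rule power_nz_sf[OF bnz])
    have "a * b ^ m \<le> b * b ^ m" using ab mult_right_mono_sf by simp
    moreover have "a * b ^ m \<noteq> b * b ^ m"
    proof
      assume "a * b ^ m = b * b ^ m"
      hence "b ^ m * a \<le> b ^ m * b" "b ^ m * b \<le> b ^ m * a" by (simp_all add: mult.commute)
      hence "a = b" using mult_cancel_le_sf[OF nz] by (simp add: antisym)
      thus False using ab by simp
    qed
    ultimately show ?thesis by simp
  qed
  also have "\<dots> = b ^ k" using m by simp
  finally show ?thesis .
qed

lemma power_inj_sf: "0 < k \<Longrightarrow> a ^ k = b ^ k \<Longrightarrow> a = b"
proof -
  assume k: "0 < k" and e: "a ^ k = b ^ k"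
  show "a = b"
  proof (rule ccontr)
    assume "a \<noteq> b"
    hence "a < b \<or> b < a" by auto
    thus False using power_strict_sf[OF _ k, of a b] power_strict_sf[OF _ k, of b a] e by auto
  qed
qed

lemma sum_le_iff_sf: "finite S \<Longrightarrow> sum f S \<le> c \<longleftrightarrow> (\<forall>i\<in>S. f i \<le> c)"
  by (induction S rule: finite_induct) (auto simp: zero_le_sf add_le_iff_sf)

lemma member_le_sum_sf: "finite S \<Longrightarrow> i \<in> S \<Longrightarrow> f i \<le> sum f S"
  using sum_le_iff_sf[of S f "sum f S"] by auto

lemma sum_attained_sf: "finite S \<Longrightarrow> S \<noteq> {} \<Longrightarrow> \<exists>i\<in>S. sum f S = f i"
proof (induction S rule: finite_ne_induct)
  case (singleton x) thus ?case by simp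
next
  case (insert x F)
  then obtain i where i: "i \<in> F" "sum f F = f i" by blast
  have "sum f (insert x F) = f x + f i" using insert i by simp
  thus ?case using i by (auto simp: add_is_max max_def)
qed

lemma sum_mono_sf: "(\<And>i. i \<in> S \<Longrightarrow> f i \<le> g i) \<Longrightarrow> sum f S \<le> sum g S"
proof (cases "finite S")
  case True
  assume h: "\<And>i. i \<in> S \<Longrightarrow> f i \<le> g i"
  show ?thesis unfolding sum_le_iff_sf[OF True]
    using h member_le_sum_sf[OF True] order_trans by blast
qed simp

end

lemma mroot_pow: "0 < k \<Longrightarrow> mroot k (a::'a::idem_semifield) ^ k = a"
proof -
  assume k: "0 < k"
  obtain y where y: "y ^ k = a" using alg_complete[OF k, of a] by blast
  show ?thesis unfolding mroot_def
    by (rule theI[of "\<lambda>y. y ^ k = a" y]) (use y power_inj_sf[OF k] in auto)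
qed

lemma mroot_le_iff: "0 < k \<Longrightarrow> mroot k (a::'a::idem_semifield) \<le> q \<longleftrightarrow> a \<le> q ^ k"
  by (metis mroot_pow power_mono_sf power_strict_sf not_le)




lemma mmul_assoc: "mmul (mmul A B) C = mmul A (mmul B (C::('a::idem_semifield,'n::finite) sqmat))"
proof (rule ext, rule ext)
  fix i j
  have "mmul (mmul A B) C i j = (\<Sum>k\<in>UNIV. \<Sum>l\<in>UNIV. A i l * B l k * C k j)"
    unfolding mmul_def by (simp add: sum_distrib_right)
  also have "\<dots> = (\<Sum>l\<in>UNIV. \<Sum>k\<in>UNIV. A i l * B l k * C k j)" by (rule sum.swap)
  also have "\<dots> = mmul A (mmul B C) i j"
    unfolding mmul_def by (simp add: sum_distrib_left mult.assoc)
  finally show "mmul (mmul A B) C i j = mmul A (mmul B C) i j" .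
qed

lemma mmul_mid_left: "mmul mid A = (A::('a::idem_semifield,'n::finite) sqmat)"
proof (rule ext, rule ext)
  fix i j
  have "mmul mid A i j = (\<Sum>k\<in>UNIV. if i = k then A k j else 0)"
    unfolding mmul_def mid_def by (rule sum.cong) auto
  thus "mmul mid A i j = A i j" by simp
qed

lemma mmul_mid_right: "mmul A mid = (A::('a::idem_semifield,'n::finite) sqmat)"
proof (rule ext, rule ext)
  fix i j
  have "mmul A mid i j = (\<Sum>k\<in>UNIV. if k = j then A i k else 0)"
    unfolding mmul_def mid_def by (rule sum.cong) auto
  thus "mmul A mid i j = A i j" by simp
qed

lemma mpow_one: "mpow A 1 = (A::('a::idem_semifield,'n::finite) sqmat)"
  by (simp add: mmul_mid_left)

lemma mvmul_mmul: "mvmul (mmul A B) x = mvmul A (mvmul B (x::('a::idem_semifield,'n::finite) vect))"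
proof (rule ext)
  fix i
  have "mvmul (mmul A B) x i = (\<Sum>k\<in>UNIV. \<Sum>l\<in>UNIV. A i l * B l k * x k)"
    unfolding mmul_def mvmul_def by (simp add: sum_distrib_right)
  also have "\<dots> = (\<Sum>l\<in>UNIV. \<Sum>k\<in>UNIV. A i l * B l k * x k)" by (rule sum.swap)
  also have "\<dots> = mvmul A (mvmul B x) i"
    unfolding mvmul_def by (simp add: sum_distrib_left mult.assoc)
  finally show "mvmul (mmul A B) x i = mvmul A (mvmul B x) i" .
qed

lemma mvmul_mono_vec: "(\<And>k. x k \<le> y k) \<Longrightarrow> mvmul (A::('a::idem_semifield,'n::finite) sqmat) x i \<le> mvmul A y i"
  unfolding mvmul_def by (intro sum_mono_sf mult_left_mono_sf) auto

lemma mvmul_mono_mat: "(\<And>k. M i k \<le> N i k) \<Longrightarrow> mvmul (M::('a::idem_semifield,'n::finite) sqmat) x i \<le> mvmul N x i"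
  unfolding mvmul_def by (intro sum_mono_sf mult_right_mono_sf) auto

lemma mpow_smul: "mpow (msmul c B) k = msmul (c ^ k) (mpow (B::('a::idem_semifield,'n::finite) sqmat) k)"
proof (induction k)
  case 0 show ?case unfolding msmul_def mid_def by (auto intro!: ext)
next
  case (Suc k)
  show ?case unfolding mpow.simps Suc unfolding msmul_def mmul_def
    by (auto intro!: ext simp: sum_distrib_left mult_ac)
qed

lemma mtr_smul: "mtr (msmul c (M::('a::idem_semifield,'n::finite) sqmat)) = c * mtr M"
  unfolding mtr_def msmul_def by (simp add: sum_distrib_left)

primrec wt :: "('a::idem_semifield,'n::finite) sqmat \<Rightarrow> (nat \<Rightarrow> 'n) \<Rightarrow> nat \<Rightarrow> 'a" where
  "wt C f 0 = 1"
| "wt C f (Suc m) = wt C f m * C (f m) (f (Suc m))"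

lemma wt_cong: "(\<And>t. t \<le> m \<Longrightarrow> f t = g t) \<Longrightarrow> wt C f m = wt C g m"
  by (induction m) auto

lemma wt_split: "wt C f (a + k) = wt C f a * wt C (\<lambda>t. f (a + t)) k"
  by (induction k) (auto simp: mult_ac)

lemma wt_le_mpow: "wt C f m \<le> mpow C m (f 0) (f m)"
proof (induction m)
  case 0 show ?case by (simp add: mid_def)
next
  case (Suc m)
  have "wt C f (Suc m) \<le> mpow C m (f 0) (f m) * C (f m) (f (Suc m))"
    using Suc by (simp add: mult_right_mono_sf)
  also have "\<dots> \<le> mpow C (Suc m) (f 0) (f (Suc m))"
    unfolding mpow.simps mmul_def by (rule member_le_sum_sf) auto
  finally show ?case .
qed

lemma mpow_walk: "mpow C m i j \<noteq> 0 \<Longrightarrow> \<exists>f. f 0 = i \<and> f m = j \<and> mpow C m i j = wt C f m"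
proof (induction m arbitrary: j)
  case 0
  hence "i = j" by (simp add: mid_def split: if_splits)
  thus ?case by (intro exI[of _ "\<lambda>_. i"]) (simp add: mid_def)
next
  case (Suc m)
  obtain l where l: "mpow C (Suc m) i j = mpow C m i l * C l j"
    unfolding mpow.simps mmul_def using sum_attained_sf[of "UNIV::'b set" "\<lambda>k. mpow C m i k * C k j"] by auto
  have "mpow C m i l \<noteq> 0" using Suc.prems l by auto
  then obtain f where f: "f 0 = i" "f m = l" "mpow C m i l = wt C f m" using Suc.IH by blast
  define g where "g = f(Suc m := j)"
  have "wt C g m = wt C f m" by (rule wt_cong) (auto simp: g_def)
  hence "wt C g (Suc m) = mpow C (Suc m) i j" using l f by (simp add: g_def)
  moreover have "g 0 = i" "g (Suc m) = j" using f by (auto simp: g_def)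
  ultimately show ?case by metis
qed

lemma pigeon: "\<exists>a b. a < b \<and> b \<le> card (UNIV::'n::finite set) \<and> f a = (f b :: 'n)"
proof (rule ccontr)
  assume h: "\<not> ?thesis"
  have "inj_on f {..card (UNIV::'n set)}"
  proof (rule inj_onI)
    fix a b assume "a \<in> {..card (UNIV::'n set)}" "b \<in> {..card (UNIV::'n set)}" "f a = f b"
    thus "a = b" using h by (metis atMost_iff linorder_neqE_nat)
  qed
  hence "card (f ` {..card (UNIV::'n set)}) = Suc (card (UNIV::'n set))"
    by (simp add: card_image)
  moreover have "card (f ` {..card (UNIV::'n set)}) \<le> card (UNIV::'n set)"
    by (rule card_mono) auto
  ultimately show False by simp
qed

lemma wt_le_mstar:
  fixes C :: "('a::idem_semifield,'n::finite) sqmat"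
  assumes H: "\<And>d. 1 \<le> d \<Longrightarrow> d \<le> card (UNIV::'n set) \<Longrightarrow> mtr (mpow C d) \<le> 1"
  shows "wt C f m \<le> mstar C (f 0) (f m)"
proof (induction m arbitrary: f rule: less_induct)
  case (less m)
  show ?case
  proof (cases "m < card (UNIV::'n set)")
    case True
    have "wt C f m \<le> mpow C m (f 0) (f m)" by (rule wt_le_mpow)
    also have "\<dots> \<le> mstar C (f 0) (f m)" unfolding mstar_def
      by (rule member_le_sum_sf) (use True in auto)
    finally show ?thesis .
  next
    case False
    obtain a b where ab: "a < b" "b \<le> card (UNIV::'n set)" "f a = f b" using pigeon by blast
    define d where "d = b - a"
    define g where "g = (\<lambda>t. if t \<le> a then f t else f (t + d))"
    have bm: "b \<le> m" using ab False by simp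
    have w1: "wt C f m = wt C f a * wt C (\<lambda>t. f (a + t)) (m - a)"
      using wt_split[of C f a "m - a"] ab bm by simp
    have w2: "wt C (\<lambda>t. f (a + t)) (m - a) = wt C (\<lambda>t. f (a + t)) d * wt C (\<lambda>t. f (b + t)) (m - b)"
      using wt_split[of C "\<lambda>t. f (a + t)" d "m - b"] ab bm by (simp add: d_def add.assoc)
    have cyc: "wt C (\<lambda>t. f (a + t)) d \<le> 1"
    proof -
      have "wt C (\<lambda>t. f (a + t)) d \<le> mpow C d (f a) (f a)"
        using wt_le_mpow[of C "\<lambda>t. f (a + t)" d] ab by (simp add: d_def)
      also have "\<dots> \<le> mtr (mpow C d)" unfolding mtr_def by (rule member_le_sum_sf) auto
      also have "\<dots> \<le> 1" using H ab by (simp add: d_def)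
      finally show ?thesis .
    qed
    have wg: "wt C g (a + (m - b)) = wt C f a * wt C (\<lambda>t. f (b + t)) (m - b)"
    proof -
      have "wt C g (a + (m - b)) = wt C g a * wt C (\<lambda>t. g (a + t)) (m - b)" by (rule wt_split)
      moreover have "wt C g a = wt C f a" by (rule wt_cong) (simp add: g_def)
      moreover have "wt C (\<lambda>t. g (a + t)) (m - b) = wt C (\<lambda>t. f (b + t)) (m - b)"
        by (rule wt_cong) (use ab in \<open>auto simp: g_def d_def add.commute\<close>)
      ultimately show ?thesis by simp
    qed
    have "wt C f m \<le> wt C f a * wt C (\<lambda>t. f (b + t)) (m - b)"
      unfolding w1 w2 using mult_right_mono_sf[OF mult_left_mono_sf[OF cyc]] by (simp add: mult.assoc)
    also have "\<dots> = wt C g (a + (m - b))" using wg by simp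
    also have "\<dots> \<le> mstar C (g 0) (g (a + (m - b)))" by (rule less) (use ab bm in auto)
    also have "g 0 = f 0" by (simp add: g_def)
    also have "g (a + (m - b)) = f m"
      using ab bm by (cases "m = b") (auto simp: g_def d_def)
    finally show ?thesis .
  qed
qed

lemma mpow_le_mstar:
  fixes C :: "('a::idem_semifield,'n::finite) sqmat"
  assumes H: "\<And>d. 1 \<le> d \<Longrightarrow> d \<le> card (UNIV::'n set) \<Longrightarrow> mtr (mpow C d) \<le> 1"
  shows "mpow C m i j \<le> mstar C i j"
proof -
  show ?thesis
  proof (cases "mpow C m i j = 0")
    case True thus ?thesis by (simp add: zero_le_sf)
  next
    case False
    then obtain f where "f 0 = i" "f m = j" "mpow C m i j = wt C f m" using mpow_walk by blast
    thus ?thesis using wt_le_mstar[OF H, of f m] by simp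
  qed
qed



lemma mpow_Suc_left: "mpow C (Suc p) = mmul C (mpow (C::('a::idem_semifield,'n::finite) sqmat) p)"
proof (induction p)
  case 0 show ?case by (simp add: mmul_mid_left mmul_mid_right)
next
  case (Suc p)
  have "mpow C (Suc (Suc p)) = mmul (mmul C (mpow C p)) C" using Suc by simp
  also have "\<dots> = mmul C (mpow C (Suc p))" by (simp add: mmul_assoc)
  finally show ?case .
qed

lemma mvmul_mid: "mvmul mid x = (x::('a::idem_semifield,'n::finite) vect)"
proof (rule ext)
  fix i
  have "mvmul mid x i = (\<Sum>k\<in>UNIV. if i = k then x k else 0)"
    unfolding mvmul_def mid_def by (rule sum.cong) auto
  thus "mvmul mid x i = x i" by simp
qed

lemma sum_le_sf: "finite S \<Longrightarrow> (\<And>i. i \<in> S \<Longrightarrow> f i \<le> (c::'a::idem_semifield)) \<Longrightarrow> sum f S \<le> c"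
  using sum_le_iff_sf by blast

lemma le_zero_sf: "(x::'a::idem_semifield) \<le> 0 \<Longrightarrow> x = 0"
  using zero_le_sf[of x] by (simp add: antisym)

lemma card_pos_n: "0 < card (UNIV::'n::finite set)"
  by (simp add: finite_UNIV_card_ge_0)

lemma mstar_ge_mpow: "p < card (UNIV::'n::finite set) \<Longrightarrow> mpow C p i j \<le> mstar (C::('a::idem_semifield,'n) sqmat) i j"
  unfolding mstar_def by (rule member_le_sum_sf) auto

lemma star_mul:
  fixes C :: "('a::idem_semifield,'n::finite) sqmat"
  assumes H: "\<And>d. 1 \<le> d \<Longrightarrow> d \<le> card (UNIV::'n set) \<Longrightarrow> mtr (mpow C d) \<le> 1"
  shows "mmul C (mstar C) i j \<le> mstar C i j"
proof -
  have "C i k * mstar C k j \<le> mstar C i j" for k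
  proof -
    have "C i k * mstar C k j = (\<Sum>p\<in>{..<card (UNIV::'n set)}. C i k * mpow C p k j)"
      unfolding mstar_def by (simp add: sum_distrib_left)
    also have "\<dots> \<le> mstar C i j"
    proof (rule sum_le_sf[OF finite_lessThan])
      fix p
      have "C i k * mpow C p k j \<le> mmul C (mpow C p) i j"
        unfolding mmul_def by (rule member_le_sum_sf) auto
      also have "\<dots> = mpow C (Suc p) i j" by (simp only: mpow_Suc_left)
      also have "\<dots> \<le> mstar C i j" by (rule mpow_le_mstar[OF H])
      finally show "C i k * mpow C p k j \<le> mstar C i j" .
    qed
    finally show ?thesis .
  qed
  thus ?thesis unfolding mmul_def[of C] by (subst sum_le_iff_sf) auto
qed

lemma mstar_nz:
  fixes C :: "('a::idem_semifield,'n::finite) sqmat"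
  assumes nz: "\<And>i j. C i j \<noteq> 0"
  shows "mstar C i j \<noteq> 0"
proof (cases "i = j")
  case True
  have "mpow C 0 i j \<le> mstar C i j" by (rule mstar_ge_mpow[OF card_pos_n])
  hence "1 \<le> mstar C i j" using True by (simp add: mid_def)
  thus ?thesis using zero_neq_one_sf le_zero_sf by fastforce
next
  case False
  have "card {i, j} \<le> card (UNIV::'n set)" by (rule card_mono) auto
  hence "1 < card (UNIV::'n set)" using False by simp
  hence "mpow C 1 i j \<le> mstar C i j" by (rule mstar_ge_mpow)
  hence "C i j \<le> mstar C i j" by (simp only: mpow_one)
  thus ?thesis using nz[of i j] le_zero_sf by fastforce
qed

lemma mvmul_regular:
  fixes M :: "('a::idem_semifield,'n::finite) sqmat"
  assumes nz: "\<And>i j. M i j \<noteq> 0" and u: "u \<noteq> (\<lambda>_. 0)"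
  shows "regular (mvmul M u)"
proof -
  obtain k where k: "u k \<noteq> 0" using u by auto
  show ?thesis unfolding regular_def
  proof
    fix i
    have "M i k * u k \<le> mvmul M u i" unfolding mvmul_def by (rule member_le_sum_sf) auto
    moreover have "M i k * u k \<noteq> 0" by (rule mult_nz_sf[OF nz k])
    ultimately show "mvmul M u i \<noteq> 0" using le_zero_sf by fastforce
  qed
qed

lemma sub_pow:
  fixes C :: "('a::idem_semifield,'n::finite) sqmat"
  assumes s: "\<And>i. mvmul C x i \<le> x i"
  shows "mvmul (mpow C p) x i \<le> x i"
proof (induction p arbitrary: i)
  case 0 show ?case by (simp add: mvmul_mid)
next
  case (Suc p)
  have "mvmul (mpow C (Suc p)) x i = mvmul (mpow C p) (mvmul C x) i" by (simp add: mvmul_mmul)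
  also have "\<dots> \<le> mvmul (mpow C p) x i" by (rule mvmul_mono_vec[OF s])
  also have "\<dots> \<le> x i" by (rule Suc)
  finally show ?case .
qed

lemma star_fix:
  fixes C :: "('a::idem_semifield,'n::finite) sqmat"
  assumes s: "\<And>i. mvmul C x i \<le> x i"
  shows "mvmul (mstar C) x = x"
proof (rule ext, rule antisym)
  fix i
  show "mvmul (mstar C) x i \<le> x i"
    unfolding mvmul_def[of "mstar C"]
  proof (rule sum_le_sf[OF finite_UNIV])
    fix k
    have "mstar C i k * x k = (\<Sum>p\<in>{..<card (UNIV::'n set)}. mpow C p i k * x k)"
      unfolding mstar_def by (simp add: sum_distrib_right)
    also have "\<dots> \<le> x i"
    proof (rule sum_le_sf[OF finite_lessThan])
      fix p
      have "mpow C p i k * x k \<le> mvmul (mpow C p) x i"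
        unfolding mvmul_def by (rule member_le_sum_sf) auto
      also have "\<dots> \<le> x i" by (rule sub_pow[OF s])
      finally show "mpow C p i k * x k \<le> x i" .
    qed
    finally show "mstar C i k * x k \<le> x i" .
  qed
  have "mpow C 0 i i \<le> mstar C i i" by (rule mstar_ge_mpow[OF card_pos_n])
  hence "1 * x i \<le> mstar C i i * x i" by (intro mult_right_mono_sf) (simp add: mid_def)
  also have "\<dots> \<le> mvmul (mstar C) x i" unfolding mvmul_def by (rule member_le_sum_sf) auto
  finally show "x i \<le> mvmul (mstar C) x i" by simp
qed

definition qf :: "('a::idem_semifield,'n::finite) sqmat \<Rightarrow> ('a,'n) vect \<Rightarrow> 'a" where
  "qf B x = (\<Sum>i\<in>UNIV. \<Sum>j\<in>UNIV. inverse (x i) * B i j * x j)"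

lemma mconj_outer:
  assumes r: "regular (x::('a::idem_semifield,'n::finite) vect)"
  shows "mconj (vouter x (vconj x)) = vouter x (vconj x)"
proof (rule ext, rule ext)
  fix i j
  have nz: "\<And>k. x k \<noteq> 0" using r by (simp add: regular_def)
  have "x j * inverse (x i) \<noteq> 0" using nz by (simp add: mult_nz_sf inverse_nz_sf)
  moreover have "inverse (x j * inverse (x i)) = x i * inverse (x j)"
    using nz by (simp add: inverse_mult_sf inverse_nz_sf inverse_inverse_sf mult.commute)
  ultimately show "mconj (vouter x (vconj x)) i j = vouter x (vconj x) i j"
    unfolding mconj_def vouter_def vconj_def using nz by simp
qed

lemma mdist_qf:
  fixes A :: "('a::idem_semifield,'n::finite) sqmat"
  assumes r: "regular x"
  shows "mdist A (vouter x (vconj x)) = qf (madd A (mconj A)) x"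
proof -
  have nz: "\<And>k. x k \<noteq> 0" using r by (simp add: regular_def)
  have t1: "mtr (mmul (mconj (vouter x (vconj x))) A) = (\<Sum>i\<in>UNIV. \<Sum>j\<in>UNIV. inverse (x i) * A i j * x j)"
  proof -
    have "mtr (mmul (mconj (vouter x (vconj x))) A) = (\<Sum>j\<in>UNIV. \<Sum>i\<in>UNIV. x j * inverse (x i) * A i j)"
      unfolding mconj_outer[OF r] unfolding mtr_def mmul_def vouter_def vconj_def using nz by simp
    also have "\<dots> = (\<Sum>i\<in>UNIV. \<Sum>j\<in>UNIV. x j * inverse (x i) * A i j)" by (rule sum.swap)
    finally show ?thesis by (simp add: mult_ac)
  qed
  have t2: "mtr (mmul (mconj A) (vouter x (vconj x))) = (\<Sum>i\<in>UNIV. \<Sum>j\<in>UNIV. inverse (x i) * mconj A i j * x j)"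
    unfolding mtr_def mmul_def vouter_def vconj_def using nz by (simp add: mult_ac)
  show ?thesis unfolding mdist_def t1 t2 qf_def madd_def
    by (simp add: distrib_left distrib_right sum.distrib)
qed

lemma pow_bound:
  fixes B :: "('a::idem_semifield,'n::finite) sqmat"
  assumes r: "regular x"
  shows "inverse (x i) * mpow B k i j * x j \<le> qf B x ^ k"
proof (induction k arbitrary: j)
  case 0
  have nz: "\<And>k. x k \<noteq> 0" using r by (simp add: regular_def)
  show ?case by (cases "i = j") (auto simp: mid_def zero_le_sf left_inverse_sf nz)
next
  case (Suc k)
  have nz: "\<And>k. x k \<noteq> 0" using r by (simp add: regular_def)
  have "inverse (x i) * mpow B (Suc k) i j * x j = (\<Sum>l\<in>UNIV. inverse (x i) * (mpow B k i l * B l j) * x j)"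
    by (simp add: mmul_def sum_distrib_left sum_distrib_right)
  also have "\<dots> \<le> qf B x ^ Suc k"
  proof (rule sum_le_sf[OF finite_UNIV])
    fix l
    have e: "inverse (x i) * (mpow B k i l * B l j) * x j
        = (inverse (x i) * mpow B k i l * x l) * (inverse (x l) * B l j * x j)"
    proof -
      have "inverse (x i) * (mpow B k i l * B l j) * x j
          = (inverse (x i) * mpow B k i l) * (x l * inverse (x l)) * (B l j * x j)"
        using right_inverse_sf[OF nz[of l]] by (simp add: mult_ac)
      thus ?thesis by (simp add: mult_ac)
    qed
    have q: "inverse (x l) * B l j * x j \<le> qf B x"
    proof -
      have "inverse (x l) * B l j * x j \<le> (\<Sum>j\<in>UNIV. inverse (x l) * B l j * x j)"
        by (rule member_le_sum_sf) auto
      also have "\<dots> \<le> qf B x" unfolding qf_def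
        by (rule member_le_sum_sf[where f = "\<lambda>l. \<Sum>j\<in>UNIV. inverse (x l) * B l j * x j"]) auto
      finally show ?thesis .
    qed
    have "(inverse (x i) * mpow B k i l * x l) * (inverse (x l) * B l j * x j) \<le> qf B x ^ k * qf B x"
      by (rule mult_mono_sf[OF Suc q])
    thus "inverse (x i) * (mpow B k i l * B l j) * x j \<le> qf B x ^ Suc k"
      unfolding e by (simp add: mult.commute)
  qed
  finally show ?case .
qed

lemma mu_le:
  fixes B :: "('a::idem_semifield,'n::finite) sqmat"
  assumes r: "regular x"
  shows "spec_rad B \<le> qf B x"
  unfolding spec_rad_def
proof (rule sum_le_sf[OF finite_atLeastAtMost])
  fix k assume k: "k \<in> {1..card (UNIV::'n set)}"
  have nz: "\<And>k. x k \<noteq> 0" using r by (simp add: regular_def)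
  have "mtr (mpow B k) \<le> qf B x ^ k" unfolding mtr_def
  proof (rule sum_le_sf[OF finite_UNIV])
    fix i
    have "mpow B k i i = inverse (x i) * mpow B k i i * x i"
      using left_inverse_sf[OF nz[of i]] by (metis mult.assoc mult.commute mult_1_left)
    also have "\<dots> \<le> qf B x ^ k" by (rule pow_bound[OF r])
    finally show "mpow B k i i \<le> qf B x ^ k" .
  qed
  moreover have "0 < k" using k by simp
  ultimately show "mroot k (mtr (mpow B k)) \<le> qf B x" using mroot_le_iff by blast
qed

lemma q_iff:
  fixes B :: "('a::idem_semifield,'n::finite) sqmat"
  assumes r: "regular x" and mu: "\<mu> \<noteq> 0"
  shows "qf B x \<le> \<mu> \<longleftrightarrow> (\<forall>i. mvmul (msmul (inverse \<mu>) B) x i \<le> x i)"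
proof -
  have nz: "\<And>k. x k \<noteq> 0" using r by (simp add: regular_def)
  have tm: "inverse (x i) * B i j * x j \<le> \<mu> \<longleftrightarrow> inverse \<mu> * B i j * x j \<le> x i" for i j
  proof -
    have "inverse (x i) * B i j * x j \<le> \<mu> \<longleftrightarrow> B i j * x j \<le> x i * \<mu>"
      using le_mult_iff_sf[OF nz[of i], of "B i j * x j" \<mu>] by (simp add: mult_ac)
    also have "\<dots> \<longleftrightarrow> inverse \<mu> * B i j * x j \<le> x i"
      using le_mult_iff_sf[OF mu, of "B i j * x j" "x i"] by (simp add: mult_ac)
    finally show ?thesis .
  qed
  show ?thesis
    unfolding qf_def mvmul_def msmul_def
    by (simp add: sum_le_iff_sf tm[simplified mult.assoc] mult.assoc)
qed

lemma mu_nz: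
  fixes B :: "('a::idem_semifield,'n::finite) sqmat"
  assumes nz: "\<And>i j. B i j \<noteq> 0"
  shows "spec_rad B \<noteq> 0"
proof -
  obtain i :: 'n where True by blast
  have "mroot 1 (mtr (mpow B 1)) \<le> spec_rad B" unfolding spec_rad_def
    by (rule member_le_sum_sf) (use card_pos_n in \<open>auto simp: Suc_le_eq\<close>)
  moreover have "mroot 1 (mtr (mpow B 1)) = mtr B"
    using mroot_pow[of 1 "mtr (mpow B 1)"] by (simp add: mmul_mid_left)
  moreover have "B i i \<le> mtr B" unfolding mtr_def by (rule member_le_sum_sf) auto
  ultimately have "B i i \<le> spec_rad B" by (metis order_trans)
  thus ?thesis using nz[of i i] le_zero_sf by fastforce
qed

lemma trC:
  fixes B :: "('a::idem_semifield,'n::finite) sqmat"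
  assumes mu: "spec_rad B \<noteq> 0" and d: "1 \<le> d" "d \<le> card (UNIV::'n set)"
  shows "mtr (mpow (msmul (inverse (spec_rad B)) B) d) \<le> 1"
proof -
  let ?m = "spec_rad B"
  have "mroot d (mtr (mpow B d)) \<le> ?m" unfolding spec_rad_def
    by (rule member_le_sum_sf[where f = "\<lambda>k. mroot k (mtr (mpow B k))"]) (use d in auto)
  moreover have "0 < d" using d by simp
  ultimately have t: "mtr (mpow B d) \<le> ?m ^ d" using mroot_le_iff by blast
  have "mtr (mpow (msmul (inverse ?m) B) d) = inverse ?m ^ d * mtr (mpow B d)"
    by (simp add: mpow_smul mtr_smul)
  also have "\<dots> \<le> inverse ?m ^ d * ?m ^ d" by (rule mult_left_mono_sf[OF t])
  also have "\<dots> = (inverse ?m * ?m) ^ d" by (simp add: power_mult_distrib)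
  also have "\<dots> = 1" using left_inverse_sf[OF mu] by simp
  finally show ?thesis .
qed


theorem theorem1:
  fixes A :: "('a::idem_semifield, 'n::finite) sqmat"
  defines "B \<equiv> madd A (mconj A)"
  defines "\<mu> \<equiv> spec_rad B"
  defines "B\<^sub>\<mu> \<equiv> msmul (inverse \<mu>) B"
  assumes B_nz: "\<forall>i j. B i j \<noteq> 0"
  shows "(\<forall>x. regular x \<longrightarrow> \<mu> \<le> mdist A (vouter x (vconj x)))
    \<and> (\<exists>x. regular x \<and> mdist A (vouter x (vconj x)) = \<mu>)
    \<and> {x. regular x \<and> mdist A (vouter x (vconj x)) = \<mu>}
        = {mvmul (mstar B\<^sub>\<mu>) u | u. u \<noteq> (\<lambda>_. 0)}"
proof -
  have Bnz: "\<And>i j. B i j \<noteq> 0" using B_nz by blast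
  have munz: "\<mu> \<noteq> 0" unfolding \<mu>_def by (rule mu_nz[OF Bnz])
  have H: "\<And>d. 1 \<le> d \<Longrightarrow> d \<le> card (UNIV::'n set) \<Longrightarrow> mtr (mpow B\<^sub>\<mu> d) \<le> 1"
    unfolding B\<^sub>\<mu>_def \<mu>_def by (rule trC[OF mu_nz[OF Bnz]])
  have Cnz: "\<And>i j. B\<^sub>\<mu> i j \<noteq> 0"
    unfolding B\<^sub>\<mu>_def msmul_def using Bnz munz by (simp add: mult_nz_sf inverse_nz_sf)
  have Snz: "\<And>i j. mstar B\<^sub>\<mu> i j \<noteq> 0" by (rule mstar_nz[OF Cnz])
  have dist: "\<And>x. regular x \<Longrightarrow> mdist A (vouter x (vconj x)) = qf B x"
    unfolding B_def by (rule mdist_qf)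
  have low: "\<And>x. regular x \<Longrightarrow> \<mu> \<le> qf B x" unfolding \<mu>_def by (rule mu_le)
  have good: "regular (mvmul (mstar B\<^sub>\<mu>) u) \<and> qf B (mvmul (mstar B\<^sub>\<mu>) u) = \<mu>"
    if u: "u \<noteq> (\<lambda>_. 0)" for u
  proof -
    let ?x = "mvmul (mstar B\<^sub>\<mu>) u"
    have r: "regular ?x" by (rule mvmul_regular[OF Snz u])
    have "mvmul B\<^sub>\<mu> ?x i \<le> ?x i" for i
    proof -
      have "mvmul B\<^sub>\<mu> ?x i = mvmul (mmul B\<^sub>\<mu> (mstar B\<^sub>\<mu>)) u i" by (simp add: mvmul_mmul)
      also have "\<dots> \<le> ?x i" by (rule mvmul_mono_mat) (rule star_mul[OF H])
      finally show ?thesis .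
    qed
    hence "qf B ?x \<le> \<mu>" using q_iff[OF r munz, of B] unfolding B\<^sub>\<mu>_def by blast
    thus ?thesis using low[OF r] r by (simp add: antisym)
  qed
  have part1: "\<forall>x. regular x \<longrightarrow> \<mu> \<le> mdist A (vouter x (vconj x))"
    using dist low by simp
  have part2: "\<exists>x. regular x \<and> mdist A (vouter x (vconj x)) = \<mu>"
  proof -
    have "(\<lambda>_::'n. 1::'a) \<noteq> (\<lambda>_. 0)" using zero_neq_one_sf by (metis)
    from good[OF this] show ?thesis using dist by metis
  qed
  have part3: "{x. regular x \<and> mdist A (vouter x (vconj x)) = \<mu>}
        = {mvmul (mstar B\<^sub>\<mu>) u | u. u \<noteq> (\<lambda>_. 0)}"
  proof (rule set_eqI, rule iffI)
    fix x assume "x \<in> {x. regular x \<and> mdist A (vouter x (vconj x)) = \<mu>}"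
    hence r: "regular x" and q: "qf B x = \<mu>" using dist by auto
    have "\<forall>i. mvmul B\<^sub>\<mu> x i \<le> x i" using q_iff[OF r munz, of B] q unfolding B\<^sub>\<mu>_def by simp
    hence fx: "mvmul (mstar B\<^sub>\<mu>) x = x" by (intro star_fix) blast
    obtain i :: 'n where True by blast
    have "x \<noteq> (\<lambda>_. 0)" using r unfolding regular_def by (metis)
    thus "x \<in> {mvmul (mstar B\<^sub>\<mu>) u | u. u \<noteq> (\<lambda>_. 0)}" using fx by (metis (mono_tags, lifting) mem_Collect_eq)
  next
    fix x assume "x \<in> {mvmul (mstar B\<^sub>\<mu>) u | u. u \<noteq> (\<lambda>_. 0)}"
    then obtain u where u: "u \<noteq> (\<lambda>_. 0)" "x = mvmul (mstar B\<^sub>\<mu>) u" by blast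
    thus "x \<in> {x. regular x \<and> mdist A (vouter x (vconj x)) = \<mu>}" using good[OF u(1)] dist by simp
  qed
  show ?thesis using part1 part2 part3 by blast
qed

end
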